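(* Let $m\ge 2$ and $n\ge 2$, and let $G_n$ be the perfect $m$-caterpillar of length $n$. Then $BD(G_n)\simeq \Sigma_m(M_2(G_{n-1}))\vee \Sigma(BD(G_{n-1}))$.
   Context: A perfect $m$-caterpillar of length $n$, $G_n$, is the tree consisting of a central path on $n$ vertices together with $m$ leaves attached to each vertex of the central path; $G_{n-1}$ is obtained from $G_n$ by deleting an endpoint of the central path together with its $m$ leaves. Let $x_1$ be that endpoint of the central path of $G_n$. $BD(G_n)$ is the simplicial complex whose vertices are the edges of $G_n$ and whose faces are edge sets $H$ in which $x_1$ has degree at most $1$ and every other vertex has degree at most $2$ (and similarly $BD(G_{n-1})$ with respect to the corresponding endpoint of the central path of $G_{n-1}$, the one adjacent to $x_1$ in $G_n$). $M_2(G)$ is the simplicial complex whose vertices are edges of $G$ and faces are $2$-matchings (edge sets in which every vertex has degree at most $2$). $\Sigma_m(\Delta)$ is the join of $\Delta$ with a set of $m$ discrete points, $\Sigma(\Delta)$ is the suspension, and $\vee$ is the wedge sum. *)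

theory Defs
  imports "HOL-Analysis.Analysis"
begin

definition simplicial_complex :: "'a set set \<Rightarrow> bool" where
  "simplicial_complex K \<longleftrightarrow> {} \<in> K \<and> (\<forall>F\<in>K. finite F \<and> (\<forall>G. G \<subseteq> F \<longrightarrow> G \<in> K))"

text \<open>Geometric realization: the points are barycentric coordinate functions whose
  support is a face; topologized as a subspace of the product topology on
  'a => real (this agrees with the usual topology for finite complexes).\<close>

definition realization :: "'a set set \<Rightarrow> ('a \<Rightarrow> real) set" where
  "realization K = {f. (\<forall>v. 0 \<le> f v) \<and> {v. f v \<noteq> 0} \<in> K \<and> finite {v. f v \<noteq> 0}
                      \<and> sum f {v. f v \<noteq> 0} = 1}"

definition geom :: "'a set set \<Rightarrow> ('a \<Rightarrow> real) topology" where
  "geom K = top_of_set (realization K)"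

definition vertex_point :: "'a \<Rightarrow> ('a \<Rightarrow> real)" where
  "vertex_point v = (\<lambda>u. if u = v then 1 else 0)"

definition sjoin :: "'a set set \<Rightarrow> 'b set set \<Rightarrow> ('a + 'b) set set" where
  "sjoin K L = {A <+> B | A B. A \<in> K \<and> B \<in> L}"

definition discrete_points :: "nat \<Rightarrow> nat set set" where
  "discrete_points m = insert {} {{i} | i. i < m}"

definition Sigma_m :: "nat \<Rightarrow> 'a set set \<Rightarrow> ('a + nat) set set" where
  "Sigma_m m K = sjoin K (discrete_points m)"

definition suspension :: "'a set set \<Rightarrow> ('a + nat) set set" where
  "suspension K = sjoin K (discrete_points 2)"

definition wedge_space :: "'a topology \<Rightarrow> 'a \<Rightarrow> 'b topology \<Rightarrow> 'b \<Rightarrow> ('a \<times> 'b) topology" where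
  "wedge_space X x0 Y y0 =
     subtopology (prod_topology X Y) ((topspace X \<times> {y0}) \<union> ({x0} \<times> topspace Y))"

text \<open>A graph is given by its set of edges, each a 2-element set of vertices.\<close>

definition edge_degree :: "'v set set \<Rightarrow> 'v \<Rightarrow> nat" where
  "edge_degree H v = card {e\<in>H. v \<in> e}"

definition M2 :: "'v set set \<Rightarrow> 'v set set set" where
  "M2 E = {H. H \<subseteq> E \<and> finite H \<and> (\<forall>v. edge_degree H v \<le> 2)}"

definition BD :: "'v set set \<Rightarrow> 'v \<Rightarrow> 'v set set set" where
  "BD E x = {H. H \<subseteq> E \<and> finite H \<and> edge_degree H x \<le> 1
               \<and> (\<forall>v. v \<noteq> x \<longrightarrow> edge_degree H v \<le> 2)}"

text \<open>Perfect m-caterpillar of length n: central path P 1 - P 2 - ... - P n, and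
  leaves L i j (j < m) attached to P i.  The endpoint x_1 of G_n is P n, so that
  deleting it with its leaves gives G_(n-1), whose corresponding endpoint
  P (n-1) is adjacent to x_1 in G_n.\<close>

datatype cvert = P nat | L nat nat

definition caterpillar :: "nat \<Rightarrow> nat \<Rightarrow> cvert set set" where
  "caterpillar m n =
     {{P i, P (Suc i)} | i. 1 \<le> i \<and> Suc i \<le> n} \<union> {{P i, L i j} | i j. 1 \<le> i \<and> i \<le> n \<and> j < m}"

definition BD_cat :: "nat \<Rightarrow> nat \<Rightarrow> cvert set set set" where
  "BD_cat m n = BD (caterpillar m n) (P n)"

definition M2_cat :: "nat \<Rightarrow> nat \<Rightarrow> cvert set set set" where
  "M2_cat m n = M2 (caterpillar m n)"

end

theory Submission
  imports Defs
begin

lemma realization_iff: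
  assumes K: "simplicial_complex K"
  shows "f \<in> realization K \<longleftrightarrow> (\<forall>v. 0 \<le> f v) \<and> (\<exists>\<sigma>\<in>K. {v. f v \<noteq> 0} \<subseteq> \<sigma> \<and> sum f \<sigma> = 1)"
proof
  assume "f \<in> realization K" then show "(\<forall>v. 0 \<le> f v) \<and> (\<exists>\<sigma>\<in>K. {v. f v \<noteq> 0} \<subseteq> \<sigma> \<and> sum f \<sigma> = 1)"
    unfolding realization_def by auto
next
  assume "(\<forall>v. 0 \<le> f v) \<and> (\<exists>\<sigma>\<in>K. {v. f v \<noteq> 0} \<subseteq> \<sigma> \<and> sum f \<sigma> = 1)"
  then obtain \<sigma> where nn: "\<forall>v. 0 \<le> f v" and s: "\<sigma> \<in> K" "{v. f v \<noteq> 0} \<subseteq> \<sigma>" "sum f \<sigma> = 1" by blast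
  have fin: "finite \<sigma>" using K s unfolding simplicial_complex_def by blast
  have "{v. f v \<noteq> 0} \<in> K" using K s unfolding simplicial_complex_def by blast
  moreover have "sum f {v. f v \<noteq> 0} = sum f \<sigma>"
    by (rule sum.mono_neutral_left[OF fin s(2)]) auto
  ultimately show "f \<in> realization K" using nn s fin unfolding realization_def
    by (auto intro: finite_subset)
qed

lemma realization_sum:
  assumes "f \<in> realization K" "{v. f v \<noteq> 0} \<subseteq> \<sigma>" "finite \<sigma>"
  shows "sum f \<sigma> = 1"
proof -
  have "sum f {v. f v \<noteq> 0} = sum f \<sigma>"
    by (rule sum.mono_neutral_left[OF assms(3) assms(2)]) auto
  then show ?thesis using assms(1) unfolding realization_def by auto
qed

lemma line_in_realization:
  assumes K: "simplicial_complex K" and f: "f \<in> realization K" and g: "g \<in> realization K"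
    and \<sigma>: "\<sigma> \<in> K" "{v. f v \<noteq> 0} \<subseteq> \<sigma>" "{v. g v \<noteq> 0} \<subseteq> \<sigma>"
    and s: "0 \<le> s" "s \<le> 1"
  shows "(\<lambda>w. (1 - s) * f w + s * g w) \<in> realization K"
proof -
  have fin: "finite \<sigma>" using K \<sigma> unfolding simplicial_complex_def by blast
  have sf: "sum f \<sigma> = 1" and sg: "sum g \<sigma> = 1"
    using realization_sum f g \<sigma> fin by blast+
  have nf: "\<forall>v. 0 \<le> f v" and ng: "\<forall>v. 0 \<le> g v" using f g unfolding realization_def by auto
  show ?thesis
  proof (subst realization_iff[OF K], intro conjI allI bexI)
    fix v show "0 \<le> (1 - s) * f v + s * g v" using nf ng s by simp
  next
    show "{v. (1 - s) * f v + s * g v \<noteq> 0} \<subseteq> \<sigma>"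
    proof
      fix v assume "v \<in> {v. (1 - s) * f v + s * g v \<noteq> 0}"
      then have "f v \<noteq> 0 \<or> g v \<noteq> 0" by auto
      then show "v \<in> \<sigma>" using \<sigma> by blast
    qed
    show "(\<Sum>w\<in>\<sigma>. (1 - s) * f w + s * g w) = 1"
      by (simp add: sum.distrib flip: sum_distrib_left add: sf sg)
  qed (fact \<sigma>)
qed

lemma cont_coord:
  fixes f :: "'x::topological_space \<Rightarrow> ('i \<Rightarrow> 'b::topological_space)"
  shows "continuous_on T f \<Longrightarrow> continuous_on T (\<lambda>p. f p i)"
  by (rule continuous_on_product_then_coordinatewise)

lemma line_htpy:
  fixes f g :: "'x::topological_space \<Rightarrow> ('i \<Rightarrow> real)"
  assumes cf: "continuous_on T f" and cg: "continuous_on T g"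
    and l: "\<And>p s. p \<in> T \<Longrightarrow> 0 \<le> s \<Longrightarrow> s \<le> 1 \<Longrightarrow> (\<lambda>w. (1 - s) * f p w + s * g p w) \<in> S"
  shows "homotopic_with_canon (\<lambda>_. True) T S f g"
  unfolding homotopic_with_def
proof (intro exI conjI allI ballI)
  let ?h = "\<lambda>q::real\<times>'x. (\<lambda>w. (1 - fst q) * f (snd q) w + fst q * g (snd q) w)"
  have c: "continuous_on ({0..1} \<times> T) ?h"
  proof (intro continuous_on_coordinatewise_then_product continuous_intros)
    fix i
    show "continuous_on ({0..1} \<times> T) (\<lambda>x. f (snd x) i)"
      by (rule continuous_on_compose2[OF cont_coord[OF cf] continuous_on_snd]) auto
    show "continuous_on ({0..1} \<times> T) (\<lambda>x. g (snd x) i)"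
      by (rule continuous_on_compose2[OF cont_coord[OF cg] continuous_on_snd]) auto
  qed
  show "continuous_map (prod_topology (top_of_set {0..1}) (top_of_set T)) (top_of_set S) ?h"
    using c l by auto
qed auto

lemma line_htpy2:
  fixes f g :: "'x::topological_space \<Rightarrow> ('i \<Rightarrow> real) \<times> ('j \<Rightarrow> real)"
  assumes cf: "continuous_on T f" and cg: "continuous_on T g"
    and l: "\<And>p s. p \<in> T \<Longrightarrow> 0 \<le> s \<Longrightarrow> s \<le> 1 \<Longrightarrow>
       ((\<lambda>w. (1 - s) * fst (f p) w + s * fst (g p) w), (\<lambda>w. (1 - s) * snd (f p) w + s * snd (g p) w)) \<in> S"
  shows "homotopic_with_canon (\<lambda>_. True) T S f g"
  unfolding homotopic_with_def
proof (intro exI conjI allI ballI)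
  let ?h = "\<lambda>q::real\<times>'x. ((\<lambda>w. (1 - fst q) * fst (f (snd q)) w + fst q * fst (g (snd q)) w),
                          (\<lambda>w. (1 - fst q) * snd (f (snd q)) w + fst q * snd (g (snd q)) w))"
  have c1: "continuous_on T (\<lambda>p. fst (f p))" "continuous_on T (\<lambda>p. snd (f p))"
     "continuous_on T (\<lambda>p. fst (g p))" "continuous_on T (\<lambda>p. snd (g p))"
    using cf cg by (auto intro: continuous_intros)
  have c: "continuous_on ({0..1} \<times> T) ?h"
  proof (intro continuous_on_Pair)
    show "continuous_on ({0..1} \<times> T) (\<lambda>x. (\<lambda>w. (1 - fst x) * fst (f (snd x)) w + fst x * fst (g (snd x)) w))"
    proof (intro continuous_on_coordinatewise_then_product continuous_intros)
      fix i
      show "continuous_on ({0..1} \<times> T) (\<lambda>x. fst (f (snd x)) i)"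
        by (rule continuous_on_compose2[OF cont_coord[OF c1(1)] continuous_on_snd]) auto
      show "continuous_on ({0..1} \<times> T) (\<lambda>x. fst (g (snd x)) i)"
        by (rule continuous_on_compose2[OF cont_coord[OF c1(3)] continuous_on_snd]) auto
    qed
    show "continuous_on ({0..1} \<times> T) (\<lambda>x. (\<lambda>w. (1 - fst x) * snd (f (snd x)) w + fst x * snd (g (snd x)) w))"
    proof (intro continuous_on_coordinatewise_then_product continuous_intros)
      fix i
      show "continuous_on ({0..1} \<times> T) (\<lambda>x. snd (f (snd x)) i)"
        by (rule continuous_on_compose2[OF cont_coord[OF c1(2)] continuous_on_snd]) auto
      show "continuous_on ({0..1} \<times> T) (\<lambda>x. snd (g (snd x)) i)"
        by (rule continuous_on_compose2[OF cont_coord[OF c1(4)] continuous_on_snd]) auto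
    qed
  qed
  show "continuous_map (prod_topology (top_of_set {0..1}) (top_of_set T)) (top_of_set S) ?h"
    using c l by auto
qed auto

lemma dp_sc: "simplicial_complex (discrete_points m)"
  unfolding simplicial_complex_def discrete_points_def by (auto simp: subset_singleton_iff)

lemma sjoin_sc:
  assumes "simplicial_complex K" "simplicial_complex K2"
  shows "simplicial_complex (sjoin K K2)"
  unfolding simplicial_complex_def sjoin_def
proof (intro conjI ballI allI impI)
  show "{} \<in> {A <+> B |A B. A \<in> K \<and> B \<in> K2}" using assms unfolding simplicial_complex_def
    by (intro CollectI exI[of _ "{}"]) auto
next
  fix F assume "F \<in> {A <+> B |A B. A \<in> K \<and> B \<in> K2}"
  then obtain A B where F: "F = A <+> B" "A \<in> K" "B \<in> K2" by blast
  then show "finite F" using assms unfolding simplicial_complex_def by auto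
  fix G assume G: "G \<subseteq> F"
  let ?A = "{a. Inl a \<in> G}" and ?B = "{b. Inr b \<in> G}"
  have "G = ?A <+> ?B" by (auto simp: Plus_def; case_tac x; auto)  
  moreover have "?A \<subseteq> A" "?B \<subseteq> B" using G F by auto
  ultimately show "G \<in> {A <+> B |A B. A \<in> K \<and> B \<in> K2}" using assms F unfolding simplicial_complex_def
    by blast
qed

lemma sjoin_dp_real:
  assumes K: "simplicial_complex K" and m: "0 < m" and y: "y \<in> realization (sjoin K (discrete_points m))"
  shows "(\<forall>v. 0 \<le> y v) \<and> (\<exists>S j. S \<in> K \<and> j < m \<and> {v. y v \<noteq> 0} \<subseteq> S <+> {j} \<and> sum (y \<circ> Inl) S + y (Inr j) = 1)"
proof -
  have sc: "simplicial_complex (sjoin K (discrete_points m))" by (rule sjoin_sc[OF K dp_sc])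
  from y obtain \<sigma> where nn: "\<forall>v. 0 \<le> y v" and \<sigma>: "\<sigma> \<in> sjoin K (discrete_points m)" "{v. y v \<noteq> 0} \<subseteq> \<sigma>"
    unfolding realization_def by blast
  from \<sigma> obtain S B where SB: "\<sigma> = S <+> B" "S \<in> K" "B \<in> discrete_points m" unfolding sjoin_def by blast
  have finS: "finite S" using K SB unfolding simplicial_complex_def by blast
  obtain j where j: "j < m" "B \<subseteq> {j}" using SB(3) m unfolding discrete_points_def by auto
  have sub: "{v. y v \<noteq> 0} \<subseteq> S <+> {j}" using \<sigma> SB j by auto
  have "sum y (S <+> {j}) = 1" by (rule realization_sum[OF y sub]) (use finS in auto)
  then have "sum (y \<circ> Inl) S + y (Inr j) = 1" by (simp add: sum.Plus finS)
  then show ?thesis using nn SB j sub by blast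
qed

lemma sjoin_dp_realI:
  assumes K: "simplicial_complex K" and "\<forall>v. 0 \<le> y v" "S \<in> K" "j < m" "{v. y v \<noteq> 0} \<subseteq> S <+> {j}"
     "sum (y \<circ> Inl) S + y (Inr j) = 1"
  shows "y \<in> realization (sjoin K (discrete_points m))"
proof -
  have finS: "finite S" using K assms unfolding simplicial_complex_def by blast
  have "S <+> {j} \<in> sjoin K (discrete_points m)" using assms unfolding sjoin_def discrete_points_def by blast
  moreover have "sum y (S <+> {j}) = 1" using assms by (simp add: sum.Plus finS)
  ultimately show ?thesis using assms(2,5)
    unfolding realization_iff[OF sjoin_sc[OF K dp_sc]] by (intro conjI bexI[of _ "S <+> {j}"]) auto
qed

locale cat_setup =
  fixes M A :: "'v set set" and m :: nat and k :: "nat \<Rightarrow> 'v" and e :: 'v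
  assumes M: "simplicial_complex M" and A: "simplicial_complex A" and AM: "A \<subseteq> M"
    and m: "0 < m" and kinj: "inj_on k {..<m}" and kM: "\<And>j S. j < m \<Longrightarrow> S \<in> M \<Longrightarrow> k j \<notin> S"
    and eM: "\<And>S. S \<in> M \<Longrightarrow> e \<notin> S" and ek: "\<And>j. j < m \<Longrightarrow> k j \<noteq> e"
begin

definition Kc where
  "Kc = M \<union> {insert (k j) S | j S. j < m \<and> S \<in> M} \<union> {insert e S | S. S \<in> A}"

lemma finM: "S \<in> M \<Longrightarrow> finite S" using M unfolding simplicial_complex_def by blast
lemma finA: "S \<in> A \<Longrightarrow> finite S" using A unfolding simplicial_complex_def by blast
lemma dM: "S \<in> M \<Longrightarrow> G \<subseteq> S \<Longrightarrow> G \<in> M" using M unfolding simplicial_complex_def by blast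
lemma dA: "S \<in> A \<Longrightarrow> G \<subseteq> S \<Longrightarrow> G \<in> A" using A unfolding simplicial_complex_def by blast

lemma Kc_cases0:
  assumes "F \<in> Kc"
  obtains "F \<in> M" | j S where "F = insert (k j) S" "j < m" "S \<in> M" | S where "F = insert e S" "S \<in> A"
  using assms unfolding Kc_def by blast

lemma Kc_sc: "simplicial_complex Kc"
  unfolding simplicial_complex_def
proof (intro conjI ballI allI impI)
  show "{} \<in> Kc" using M unfolding Kc_def simplicial_complex_def by auto
next
  fix F assume F: "F \<in> Kc"
  then show "finite F"
    by (cases rule: Kc_cases0) (auto dest: finM finA)
  fix G assume G: "G \<subseteq> F"
  show "G \<in> Kc" using F
  proof (cases rule: Kc_cases0)
    case 1 then show ?thesis using dM[OF _ G] unfolding Kc_def by blast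
  next
    case (2 j S)
    show ?thesis
    proof (cases "k j \<in> G")
      case True
      have "G = insert (k j) (G - {k j})" using True by auto
      moreover have "G - {k j} \<in> M" using dM[of S "G - {k j}"] 2 G by blast
      ultimately show ?thesis using 2 unfolding Kc_def by blast
    next
      case False then have "G \<subseteq> S" using G 2 by auto
      then show ?thesis using dM[of S G] 2 unfolding Kc_def by blast
    qed
  next
    case (3 S)
    show ?thesis
    proof (cases "e \<in> G")
      case True
      have "G = insert e (G - {e})" using True by auto
      moreover have "G - {e} \<in> A" using dA[of S "G - {e}"] 3 G by blast
      ultimately show ?thesis using 3 unfolding Kc_def by blast
    next
      case False then have "G \<subseteq> S" using G 3 by auto
      then have "G \<in> A" using dA 3 by blast
      then show ?thesis using AM unfolding Kc_def by blast
    qed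
  qed
qed

lemma Kc_cases:
  assumes x: "x \<in> realization Kc"
  shows "(\<forall>v. 0 \<le> x v) \<and>
    ((\<exists>S j. S \<in> M \<and> j < m \<and> {v. x v \<noteq> 0} \<subseteq> insert (k j) S \<and> sum x S + x (k j) = 1) \<or>
     (\<exists>S. S \<in> A \<and> {v. x v \<noteq> 0} \<subseteq> insert e S \<and> sum x S + x e = 1))"
proof -
  from x obtain \<sigma> where nn: "\<forall>v. 0 \<le> x v" and \<sigma>: "\<sigma> \<in> Kc" "{v. x v \<noteq> 0} \<subseteq> \<sigma>"
    unfolding realization_def by blast
  show ?thesis using \<sigma>(1)
  proof (unfold Kc_def, elim UnE CollectE exE conjE)
    assume S: "\<sigma> \<in> M"
    have sub: "{v. x v \<noteq> 0} \<subseteq> insert (k 0) \<sigma>" using \<sigma> by auto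
    have "sum x (insert (k 0) \<sigma>) = 1" by (rule realization_sum[OF x sub]) (use finM S in auto)
    then have "sum x \<sigma> + x (k 0) = 1" using kM[OF m S] finM[OF S] by (simp add: add.commute)
    then show ?thesis using nn S m sub by blast
  next
    fix j S assume FS: "\<sigma> = insert (k j) S" "j < m" "S \<in> M"
    have "sum x (insert (k j) S) = 1" by (rule realization_sum[OF x]) (use finM FS \<sigma> in auto)
    then have "sum x S + x (k j) = 1" using kM FS finM by (simp add: add.commute)
    then show ?thesis using nn FS \<sigma> by blast
  next
    fix S assume FS: "\<sigma> = insert e S" "S \<in> A"
    have "sum x (insert e S) = 1" by (rule realization_sum[OF x]) (use finA FS \<sigma> in auto)
    then have "sum x S + x e = 1" using eM AM FS finA by (auto simp add: add.commute)
    then show ?thesis using nn FS \<sigma> by blast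
  qed
qed

lemma KcI1:
  assumes "\<forall>v. 0 \<le> x v" "S \<in> M" "j < m" "{v. x v \<noteq> 0} \<subseteq> insert (k j) S" "sum x S + x (k j) = 1"
  shows "x \<in> realization Kc"
proof -
  have "insert (k j) S \<in> Kc" using assms unfolding Kc_def by blast
  moreover have "sum x (insert (k j) S) = 1" using assms kM finM by (simp add: add.commute)
  ultimately show ?thesis using assms(1,4)
    unfolding realization_iff[OF Kc_sc] by (intro conjI bexI[of _ "insert (k j) S"]) auto
qed

lemma KcI2:
  assumes "\<forall>v. 0 \<le> x v" "S \<in> A" "{v. x v \<noteq> 0} \<subseteq> insert e S" "sum x S + x e = 1"
  shows "x \<in> realization Kc"
proof -
  have "insert e S \<in> Kc" using assms unfolding Kc_def by blast
  moreover have "sum x (insert e S) = 1" using assms eM AM finA by (auto simp add: add.commute)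
  ultimately show ?thesis using assms(1,3)
    unfolding realization_iff[OF Kc_sc] by (intro conjI bexI[of _ "insert e S"]) auto
qed

end

definition dF :: "real \<Rightarrow> real" where "dF t = max 0 (1 - 2*t) / max (1 - t) (1/2)"
definition cF :: "real \<Rightarrow> real" where "cF t = max 0 (min ((4*t - 2) / max (1 - t) (1/4)) 4)"
definition pF :: "real \<Rightarrow> real" where "pF t = 1 / max (1 - t) (1/4)"

lemma dF_nn: "0 \<le> dF t" unfolding dF_def by simp
lemma cF_nn: "0 \<le> cF t" unfolding cF_def by simp
lemma pF_nn: "0 \<le> pF t" unfolding pF_def by simp
lemma dF0: "dF 0 = 1" unfolding dF_def by simp
lemma pF0: "pF 0 = 1" unfolding pF_def by simp
lemma dF_big: "1/2 \<le> t \<Longrightarrow> dF t = 0" unfolding dF_def by simp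
lemma cF_small: assumes "t \<le> 1/2" shows "cF t = 0"
proof -
  have "(4*t-2)/max (1-t) (1/4) \<le> 0" by (rule divide_nonpos_pos) (use assms in auto)
  then show ?thesis unfolding cF_def by simp
qed
lemma a1: assumes "t \<le> 1" shows "(1-t) * dF t + min 1 (2*t) = 1"
proof (cases "t \<le> 1/2")
  case True
  then have "max (1 - t) (1/2) = 1 - t" "max 0 (1 - 2*t) = 1 - 2*t" "min 1 (2*t) = 2*t" by auto
  then show ?thesis using True by (simp add: dF_def)
next
  case False then show ?thesis by (simp add: dF_big)
qed
lemma a3: assumes "1/2 \<le> t" "t \<le> 1" shows "(1-t) * cF t + max 0 (min 1 (3-4*t)) + max 0 (4*t-3) = 1"
proof (cases "t \<le> 3/4")
  case True
  then have "max (1 - t) (1/4) = 1 - t" "max 0 (4*t-3) = 0" "max 0 (min 1 (3-4*t)) = 3 - 4*t" using assms by auto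
  moreover have "(4*t - 2) / (1 - t) \<le> 4" using True by (simp add: divide_le_eq)
  moreover have "0 \<le> (4*t - 2) / (1 - t)" using True assms by simp
  ultimately show ?thesis using True by (simp add: cF_def)
next
  case False
  then have "max (1 - t) (1/4) = 1/4" "max 0 (4*t-3) = 4*t-3" "max 0 (min 1 (3-4*t)) = 0" by auto
  moreover have "min ((4 * t - 2) * 4) 4 = 4" using False by simp
  ultimately show ?thesis by (simp add: cF_def algebra_simps)
qed
lemma a4: "t \<le> 1 \<Longrightarrow> (1-t) * pF t + max 0 (4*t-3) = 1"
  unfolding pF_def by (auto simp: max_def min_def field_simps)

context cat_setup begin

definition bpt :: "'v + nat \<Rightarrow> real" where "bpt = vertex_point (Inr 0)"

definition F1 :: "('v \<Rightarrow> real) \<Rightarrow> ('v + nat \<Rightarrow> real)" where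
  "F1 x = (\<lambda>i. case i of Inl w \<Rightarrow> if w = e \<or> w \<in> k ` {..<m} then 0 else x w * dF (x e)
     | Inr j \<Rightarrow> if j < m then x (k j) + (if j = 0 then min 1 (2 * x e) else 0) else 0)"

definition F2 :: "('v \<Rightarrow> real) \<Rightarrow> ('v + nat \<Rightarrow> real)" where
  "F2 x = (\<lambda>i. case i of Inl w \<Rightarrow> if w = e \<or> w \<in> k ` {..<m} then 0 else x w * cF (x e)
     | Inr j \<Rightarrow> if j = 0 then max 0 (min 1 (3 - 4 * x e)) else if j = 1 then max 0 (4 * x e - 3) else 0)"

definition g1 :: "('v + nat \<Rightarrow> real) \<Rightarrow> ('v \<Rightarrow> real)" where
  "g1 y = (\<lambda>w. y (Inl w) + (\<Sum>j<m. if w = k j then y (Inr j) else 0))"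

definition g2 :: "('v + nat \<Rightarrow> real) \<Rightarrow> ('v \<Rightarrow> real)" where
  "g2 z = (\<lambda>w. z (Inl w) + (if w = k 0 then z (Inr 0) else 0) + (if w = e then z (Inr 1) else 0))"

definition GG :: "('v + nat \<Rightarrow> real) \<times> ('v + nat \<Rightarrow> real) \<Rightarrow> ('v \<Rightarrow> real)" where
  "GG p = (\<lambda>w. g1 (fst p) w + g2 (snd p) w - vertex_point (k 0) w)"

definition PP :: "('v \<Rightarrow> real) \<Rightarrow> ('v \<Rightarrow> real)" where
  "PP x = (\<lambda>w. if w = e then max 0 (4 * x e - 3) else if w \<in> k ` {..<m} then x w else x w * pF (x e))"

definition QQ :: "('v + nat \<Rightarrow> real) \<Rightarrow> ('v + nat \<Rightarrow> real)" where
  "QQ z = (\<lambda>i. case i of Inl w \<Rightarrow> z (Inl w) * pF (z (Inr 1))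
     | Inr j \<Rightarrow> if j = 1 then max 0 (4 * z (Inr 1) - 3) else z (Inr j))"

definition R1 where "R1 = realization (Sigma_m m M)"
definition R2 where "R2 = realization (suspension A)"
definition RK where "RK = realization Kc"
definition WW where "WW = R1 \<times> {bpt} \<union> {bpt} \<times> R2"

lemma SM_sc: "simplicial_complex (Sigma_m m M)"
  unfolding Sigma_m_def by (rule sjoin_sc[OF M dp_sc])
lemma SA_sc: "simplicial_complex (suspension A)"
  unfolding suspension_def by (rule sjoin_sc[OF A dp_sc])

lemma kM': "S \<in> M \<Longrightarrow> w \<in> S \<Longrightarrow> w \<notin> k ` {..<m}" using kM by blast
lemma eA: "S \<in> A \<Longrightarrow> e \<notin> S" using eM AM by blast

lemma F2_small: "x e \<le> 1/2 \<Longrightarrow> F2 x = bpt"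
  unfolding F2_def bpt_def vertex_point_def
  by (rule ext) (auto split: sum.split simp: cF_small)

lemma F1_big: "1/2 \<le> x e \<Longrightarrow> (\<And>j. j < m \<Longrightarrow> x (k j) = 0) \<Longrightarrow> F1 x = bpt"
  unfolding F1_def bpt_def vertex_point_def
  by (rule ext) (auto split: sum.split simp: dF_big m)

lemma bpt_R1: "bpt \<in> R1"
  unfolding R1_def Sigma_m_def
  by (rule sjoin_dp_realI[OF M, where S="{}" and j=0]) (use M m in \<open>auto simp: bpt_def vertex_point_def simplicial_complex_def\<close>)

lemma bpt_R2: "bpt \<in> R2"
  unfolding R2_def suspension_def
  by (rule sjoin_dp_realI[OF A, where S="{}" and j=0]) (use A in \<open>auto simp: bpt_def vertex_point_def simplicial_complex_def\<close>)

lemma caseM: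
  assumes nn: "\<forall>v. 0 \<le> x v" and S: "S \<in> M" and j: "j < m" and sub: "{v. x v \<noteq> 0} \<subseteq> insert (k j) S"
    and sm: "sum x S + x (k j) = 1"
  shows "x e = 0" "F1 x \<in> R1" "{i. F1 x i \<noteq> 0} \<subseteq> S <+> {j}" "F2 x = bpt" "GG (F1 x, F2 x) = x" "PP x = x"
proof -
  show xe: "x e = 0" using sub eM[OF S] ek[OF j] by auto
  have xk: "x (k j') = 0" if "j' < m" "j' \<noteq> j" for j'
    using sub kM[OF that(1) S] kinj j that unfolding inj_on_def by auto
  show sub1: "{i. F1 x i \<noteq> 0} \<subseteq> S <+> {j}"
  proof
    fix i assume i: "i \<in> {i. F1 x i \<noteq> 0}"
    show "i \<in> S <+> {j}"
    proof (cases i)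
      case (Inl w) then show ?thesis using i sub j by (auto simp: F1_def split: if_splits)
    next
      case (Inr j') then show ?thesis using i xk xe by (auto simp: F1_def split: if_splits)
    qed
  qed
  have s1: "sum (F1 x \<circ> Inl) S = sum x S"
    by (rule sum.cong) (auto simp: F1_def xe dF0 kM'[OF S] eM[OF S])
  show "F1 x \<in> R1" unfolding R1_def Sigma_m_def
  proof (rule sjoin_dp_realI[OF M _ S j sub1])
    show "\<forall>v. 0 \<le> F1 x v" using nn by (auto simp: F1_def dF_nn split: sum.split)
    show "sum (F1 x \<circ> Inl) S + F1 x (Inr j) = 1" using s1 sm j xe by (cases "j = 0") (auto simp add: F1_def)
  qed
  show F2: "F2 x = bpt" by (rule F2_small) (simp add: xe)
  show "GG (F1 x, F2 x) = x"
  proof (rule ext)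
    fix w
    have g2b: "g2 bpt w = vertex_point (k 0) w"
      by (simp add: g2_def bpt_def vertex_point_def ek[OF m])
    show "GG (F1 x, F2 x) w = x w"
    proof (cases "w \<in> k ` {..<m}")
      case True
      then obtain j' where j': "j' < m" "w = k j'" by auto
      have "(\<Sum>j<m. if w = k j then F1 x (Inr j) else 0) = (\<Sum>j\<in>{j'}. if w = k j then F1 x (Inr j) else 0)"
        by (rule sum.mono_neutral_right) (use j' kinj in \<open>auto simp: inj_on_def\<close>)
      also have "\<dots> = x w" using j' xe by (simp add: F1_def)
      finally have s: "(\<Sum>j<m. if w = k j then F1 x (Inr j) else 0) = x w" .
      have "F1 x (Inl w) = 0" using True by (simp add: F1_def)
      then show ?thesis unfolding GG_def g1_def fst_conv snd_conv F2 s g2b by simp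
    next
      case False
      then have s: "(\<Sum>j<m. if w = k j then F1 x (Inr j) else 0) = 0" by (intro sum.neutral) auto
      have "F1 x (Inl w) = x w" using False xe by (cases "w = e") (auto simp: F1_def dF0)
      then show ?thesis unfolding GG_def g1_def fst_conv snd_conv F2 s g2b by simp
    qed
  qed
  show "PP x = x" by (rule ext) (auto simp: PP_def xe pF0)
qed

end

context cat_setup begin

lemma g1_at: "g1 y w = y (Inl w) + (if w \<in> k ` {..<m} then y (Inr (the_inv_into {..<m} k w)) else 0)"
proof (cases "w \<in> k ` {..<m}")
  case True
  then obtain j' where j': "j' < m" "w = k j'" by auto
  have "(\<Sum>j<m. if w = k j then y (Inr j) else 0) = (\<Sum>j\<in>{j'}. if w = k j then y (Inr j) else 0)"
    by (rule sum.mono_neutral_right) (use j' kinj in \<open>auto simp: inj_on_def\<close>)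
  also have "\<dots> = y (Inr j')" using j' by simp
  finally show ?thesis using True j' the_inv_into_f_f[OF kinj] by (simp add: g1_def)
next
  case False
  then have s: "(\<Sum>j<m. if w = k j then y (Inr j) else 0) = 0" by (intro sum.neutral) auto
  then show ?thesis using False by (simp add: g1_def)
qed

lemma caseA:
  assumes nn: "\<forall>v. 0 \<le> x v" and S: "S \<in> A" and sub: "{v. x v \<noteq> 0} \<subseteq> insert e S"
    and sm: "sum x S + x e = 1"
  shows "\<And>j. j < m \<Longrightarrow> x (k j) = 0" "0 \<le> x e" "x e \<le> 1"
    "F1 x \<in> R1" "{i. F1 x i \<noteq> 0} \<subseteq> S <+> {0}"
    "F2 x \<in> R2" "x e \<le> 3/4 \<Longrightarrow> {i. F2 x i \<noteq> 0} \<subseteq> S <+> {0}"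
    "3/4 \<le> x e \<Longrightarrow> {i. F2 x i \<noteq> 0} \<subseteq> S <+> {1}"
    "F1 x = bpt \<or> F2 x = bpt"
    "PP x \<in> RK" "{v. PP x v \<noteq> 0} \<subseteq> insert e S" "x e \<le> 3/4 \<Longrightarrow> {v. PP x v \<noteq> 0} \<subseteq> S"
    "x e \<le> 3/4 \<Longrightarrow> {v. GG (F1 x, F2 x) v \<noteq> 0} \<subseteq> insert (k 0) S"
    "3/4 \<le> x e \<Longrightarrow> {v. GG (F1 x, F2 x) v \<noteq> 0} \<subseteq> insert e S"
proof -
  have SM: "S \<in> M" using S AM by blast
  have finS: "finite S" using finA[OF S] .
  show xk: "x (k j) = 0" if "j < m" for j
    using sub kM[OF that SM] ek[OF that] by auto
  show t0: "0 \<le> x e" using nn by simp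
  have "0 \<le> sum x S" using nn by (simp add: sum_nonneg)
  then show t1: "x e \<le> 1" using sm by simp
  have sx: "sum x S = 1 - x e" using sm by simp
  have F1l: "F1 x (Inl w) = (if w \<in> S then x w * dF (x e) else 0)" for w
    using sub kM'[OF SM] eA[OF S] by (auto simp: F1_def)
  have F2l: "F2 x (Inl w) = (if w \<in> S then x w * cF (x e) else 0)" for w
    using sub kM'[OF SM] eA[OF S] by (auto simp: F2_def)
  have F2r: "F2 x (Inr j) = (if j = 0 then max 0 (min 1 (3 - 4 * x e)) else if j = 1 then max 0 (4 * x e - 3) else 0)" for j
    by (simp add: F2_def)
  have F1r: "F1 x (Inr j) = (if j = 0 then min 1 (2 * x e) else 0)" for j
    using xk m by (auto simp: F1_def)
  show sub1: "{i. F1 x i \<noteq> 0} \<subseteq> S <+> {0}"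
  proof
    fix i assume "i \<in> {i. F1 x i \<noteq> 0}" then show "i \<in> S <+> {0}"
      by (cases i) (auto simp: F1l F1r split: if_splits)
  qed
  have s1: "sum (F1 x \<circ> Inl) S = dF (x e) * (1 - x e)"
    by (simp add: F1l sx flip: sx sum_distrib_right; simp add: mult.commute)
  show "F1 x \<in> R1" unfolding R1_def Sigma_m_def
  proof (rule sjoin_dp_realI[OF M _ SM m sub1])
    show "\<forall>v. 0 \<le> F1 x v" using nn by (auto simp: F1_def dF_nn split: sum.split)
    show "sum (F1 x \<circ> Inl) S + F1 x (Inr 0) = 1" using s1 a1[OF t1] by (simp add: F1r mult.commute)
  qed
  have s2: "sum (F2 x \<circ> Inl) S = cF (x e) * (1 - x e)"
    by (simp add: F2l sx flip: sx sum_distrib_right; simp add: mult.commute)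
  have nn2: "\<forall>v. 0 \<le> F2 x v" using nn by (auto simp: F2_def cF_nn split: sum.split)
  show sub2a: "{i. F2 x i \<noteq> 0} \<subseteq> S <+> {0}" if "x e \<le> 3/4"
  proof
    fix i assume "i \<in> {i. F2 x i \<noteq> 0}" then show "i \<in> S <+> {0}"
      using that by (cases i) (auto simp: F2l F2r split: if_splits)
  qed
  show sub2b: "{i. F2 x i \<noteq> 0} \<subseteq> S <+> {1}" if "3/4 \<le> x e"
  proof
    fix i assume "i \<in> {i. F2 x i \<noteq> 0}" then show "i \<in> S <+> {1}"
      using that by (cases i) (auto simp: F2l F2r split: if_splits)
  qed
  show "F2 x \<in> R2" unfolding R2_def suspension_def
  proof (cases "x e \<le> 3/4")
    case True
    show "F2 x \<in> realization (sjoin A (discrete_points 2))"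
    proof (rule sjoin_dp_realI[OF A nn2 S _ sub2a[OF True]])
      show "sum (F2 x \<circ> Inl) S + F2 x (Inr 0) = 1"
      proof (cases "x e \<le> 1/2")
        case True then show ?thesis using s2 by (simp add: cF_small F2_def)
      next
        case False
        then show ?thesis using s2 a3[of "x e"] t1 \<open>x e \<le> 3/4\<close> by (simp add: F2_def mult.commute)
      qed
    qed simp
  next
    case False
    show "F2 x \<in> realization (sjoin A (discrete_points 2))"
    proof (rule sjoin_dp_realI[OF A nn2 S _ sub2b])
      show "sum (F2 x \<circ> Inl) S + F2 x (Inr 1) = 1"
        using s2 a3[of "x e"] t1 False by (simp add: F2_def mult.commute)
    qed (use False in auto)
  qed
  show "F1 x = bpt \<or> F2 x = bpt"
  proof (cases "x e \<le> 1/2")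
    case True then show ?thesis using F2_small by blast
  next
    case False then show ?thesis using F1_big[of x] xk by force
  qed
  have PPl: "PP x w = (if w = e then max 0 (4 * x e - 3) else if w \<in> S then x w * pF (x e) else 0)" for w
    using sub kM'[OF SM] eA[OF S] xk by (auto simp: PP_def)
  show subP: "{v. PP x v \<noteq> 0} \<subseteq> insert e S" by (auto simp: PPl split: if_splits)
  show "{v. PP x v \<noteq> 0} \<subseteq> S" if "x e \<le> 3/4" using that by (auto simp: PPl split: if_splits)
  have sP: "sum (PP x) S = pF (x e) * (1 - x e)"
  proof -
    have "sum (PP x) S = sum (\<lambda>w. x w * pF (x e)) S"
      by (rule sum.cong) (use eA[OF S] in \<open>auto simp: PPl\<close>)
    then show ?thesis by (simp add: sx flip: sum_distrib_right; simp add: mult.commute)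
  qed
  show "PP x \<in> RK" unfolding RK_def
  proof (rule KcI2[OF _ S subP])
    show "\<forall>v. 0 \<le> PP x v" using nn by (auto simp: PPl pF_nn)
    show "sum (PP x) S + PP x e = 1" using sP a4[OF t1] by (simp add: PPl mult.commute)
  qed
  have GGv: "GG (F1 x, F2 x) w = F1 x (Inl w) + (if w = k 0 then min 1 (2 * x e) else 0)
      + F2 x (Inl w) + (if w = k 0 then F2 x (Inr 0) else 0) + (if w = e then F2 x (Inr 1) else 0)
      - (if w = k 0 then 1 else 0)" for w
  proof -
    have "(if w \<in> k ` {..<m} then F1 x (Inr (the_inv_into {..<m} k w)) else 0) = (if w = k 0 then min 1 (2 * x e) else 0)"
    proof (cases "w \<in> k ` {..<m}")
      case True
      then obtain j where j: "j < m" "w = k j" by auto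
      then have "the_inv_into {..<m} k w = j" using the_inv_into_f_f[OF kinj] by auto
      moreover have "(w = k 0) = (j = 0)" using j kinj m unfolding inj_on_def by auto
      ultimately show ?thesis using True by (simp add: F1r)
    next
      case False then show ?thesis using m by auto
    qed
    then show ?thesis by (simp add: GG_def g1_at g2_def vertex_point_def)
  qed
  show "{v. GG (F1 x, F2 x) v \<noteq> 0} \<subseteq> insert (k 0) S" if "x e \<le> 3/4"
  proof
    fix w assume w: "w \<in> {v. GG (F1 x, F2 x) v \<noteq> 0}"
    show "w \<in> insert (k 0) S"
    proof (rule ccontr)
      assume "w \<notin> insert (k 0) S"
      moreover have "max 0 (4 * x e - 3) = 0" using that by simp
      ultimately show False using w that ek[OF m] by (auto simp: GGv F1l F2l F2r split: if_splits)
    qed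
  qed
  show "{v. GG (F1 x, F2 x) v \<noteq> 0} \<subseteq> insert e S" if "3/4 \<le> x e"
  proof
    fix w assume w: "w \<in> {v. GG (F1 x, F2 x) v \<noteq> 0}"
    show "w \<in> insert e S"
    proof (rule ccontr)
      assume "w \<notin> insert e S"
      moreover have "k 0 \<notin> S" using kM[OF m SM] .
      moreover have "max 0 (min 1 (3 - 4 * x e)) = 0" "min 1 (2 * x e) = 1" using that by auto
      ultimately show False using w that ek[OF m] by (auto simp: GGv F1l F2l F2r split: if_splits)
    qed
  qed
qed

end

lemma cont_proj [continuous_intros]: "continuous_on S (\<lambda>x::'i \<Rightarrow> 'b::topological_space. x i)"
  by (rule continuous_on_subset[OF continuous_on_product_coordinates]) simp

lemma cont_if_const [continuous_intros]:
  "(c \<Longrightarrow> continuous_on S f) \<Longrightarrow> (\<not> c \<Longrightarrow> continuous_on S g) \<Longrightarrow> continuous_on S (\<lambda>x. if c then f x else g x)"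
  by (cases c) auto

lemma cont_dF [continuous_intros]: "continuous_on S f \<Longrightarrow> continuous_on S (\<lambda>x. dF (f x))"
  unfolding dF_def by (intro continuous_intros) (auto simp: max_def)
lemma cont_cF [continuous_intros]: "continuous_on S f \<Longrightarrow> continuous_on S (\<lambda>x. cF (f x))"
  unfolding cF_def by (intro continuous_intros) (auto simp: max_def)
lemma cont_pF [continuous_intros]: "continuous_on S f \<Longrightarrow> continuous_on S (\<lambda>x. pF (f x))"
  unfolding pF_def by (intro continuous_intros) (auto simp: max_def)

context cat_setup begin

lemma cont_F1: "continuous_on S F1"
proof (rule continuous_on_coordinatewise_then_product)
  fix i show "continuous_on S (\<lambda>x. F1 x i)"
    by (cases i) (auto simp: F1_def intro!: continuous_intros)
qed

lemma cont_F2: "continuous_on S F2"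
proof (rule continuous_on_coordinatewise_then_product)
  fix i show "continuous_on S (\<lambda>x. F2 x i)"
    by (cases i) (auto simp: F2_def intro!: continuous_intros)
qed

lemma cont_PP: "continuous_on S PP"
proof (rule continuous_on_coordinatewise_then_product)
  fix i show "continuous_on S (\<lambda>x. PP x i)"
    by (auto simp: PP_def intro!: continuous_intros)
qed

lemma cont_QQ: "continuous_on S QQ"
proof (rule continuous_on_coordinatewise_then_product)
  fix i show "continuous_on S (\<lambda>x. QQ x i)"
    by (cases i) (auto simp: QQ_def intro!: continuous_intros)
qed

lemma cont_g1: "continuous_on S g1"
proof (rule continuous_on_coordinatewise_then_product)
  fix i show "continuous_on S (\<lambda>x. g1 x i)"
    by (auto simp: g1_def intro!: continuous_intros)
qed

lemma cont_g2: "continuous_on S g2"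
proof (rule continuous_on_coordinatewise_then_product)
  fix i show "continuous_on S (\<lambda>x. g2 x i)"
    by (auto simp: g2_def intro!: continuous_intros)
qed

lemma cont_GG: "continuous_on S GG"
proof (rule continuous_on_coordinatewise_then_product)
  fix i
  have "continuous_on S (\<lambda>p. g1 (fst p) i)"
    by (rule continuous_on_compose2[OF cont_coord[OF cont_g1[of UNIV]], where f=fst]) (auto intro: continuous_intros)
  moreover have "continuous_on S (\<lambda>p. g2 (snd p) i)"
    by (rule continuous_on_compose2[OF cont_coord[OF cont_g2[of UNIV]], where f=snd]) (auto intro: continuous_intros)
  ultimately show "continuous_on S (\<lambda>x. GG x i)"
    unfolding GG_def by (intro continuous_intros)
qed

end

context cat_setup begin

lemma face_plus: "S \<in> K \<Longrightarrow> j < n \<Longrightarrow> S <+> {j} \<in> sjoin K (discrete_points n)"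
  unfolding sjoin_def discrete_points_def by (intro CollectI exI[of _ S] exI[of _ "{j}"]) auto

lemma R1_cases:
  assumes "y \<in> R1"
  obtains S j where "\<forall>v. 0 \<le> y v" "S \<in> M" "j < m" "{v. y v \<noteq> 0} \<subseteq> S <+> {j}" "sum (y \<circ> Inl) S + y (Inr j) = 1"
proof -
  have "(\<forall>v. 0 \<le> y v) \<and> (\<exists>S j. S \<in> M \<and> j < m \<and> {v. y v \<noteq> 0} \<subseteq> S <+> {j} \<and> sum (y \<circ> Inl) S + y (Inr j) = 1)"
    by (rule sjoin_dp_real[OF M m]) (use assms in \<open>auto simp: R1_def Sigma_m_def\<close>)
  then show thesis using that by blast
qed

lemma R2_cases:
  assumes "z \<in> R2"
  obtains S i where "\<forall>v. 0 \<le> z v" "S \<in> A" "i < 2" "{v. z v \<noteq> 0} \<subseteq> S <+> {i}" "sum (z \<circ> Inl) S + z (Inr i) = 1"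
proof -
  have "(\<forall>v. 0 \<le> z v) \<and> (\<exists>S j. S \<in> A \<and> j < 2 \<and> {v. z v \<noteq> 0} \<subseteq> S <+> {j} \<and> sum (z \<circ> Inl) S + z (Inr j) = 1)"
    by (rule sjoin_dp_real[OF A]) (use assms in \<open>auto simp: R2_def suspension_def\<close>)
  then show thesis using that by blast
qed

lemma g2_bpt: "g2 bpt = vertex_point (k 0)"
  by (rule ext) (simp add: g2_def bpt_def vertex_point_def ek[OF m])

lemma g1_bpt: "g1 bpt = vertex_point (k 0)"
proof (rule ext)
  fix w show "g1 bpt w = vertex_point (k 0) w"
  proof (cases "w \<in> k ` {..<m}")
    case True
    then obtain j where j: "j < m" "w = k j" by auto
    then have "the_inv_into {..<m} k w = j" using the_inv_into_f_f[OF kinj] by auto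
    moreover have "(w = k 0) = (j = 0)" using j kinj m unfolding inj_on_def by auto
    ultimately show ?thesis using True by (simp add: g1_at bpt_def vertex_point_def)
  next
    case False then show ?thesis using m by (auto simp: g1_at bpt_def vertex_point_def)
  qed
qed

lemma GG_y: "GG (y, bpt) = g1 y" by (rule ext) (simp add: GG_def g2_bpt)
lemma GG_z: "GG (bpt, z) = g2 z" by (rule ext) (simp add: GG_def g1_bpt)

lemma F2_vk0: "F2 (vertex_point (k 0)) = bpt"
  by (rule F2_small) (use ek[OF m] in \<open>auto simp: vertex_point_def\<close>)
lemma QQ_bpt: "QQ bpt = bpt"
  by (rule ext) (auto simp: QQ_def bpt_def vertex_point_def pF0 split: sum.split)

lemma caseY:
  assumes y: "y \<in> R1"
  shows "g1 y \<in> RK" "F1 (g1 y) = y" "F2 (g1 y) = bpt"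
proof -
  obtain S j where nn: "\<forall>v. 0 \<le> y v" and S: "S \<in> M" and j: "j < m" and sub: "{v. y v \<noteq> 0} \<subseteq> S <+> {j}"
    and sm: "sum (y \<circ> Inl) S + y (Inr j) = 1" using R1_cases[OF y] by blast
  have yl: "y (Inl w) = 0" if "w \<notin> S" for w using sub that by auto
  have yr: "y (Inr j') = 0" if "j' \<noteq> j" for j' using sub that by auto
  have g1S: "g1 y w = y (Inl w)" if "w \<in> S" for w using kM'[OF S that] by (simp add: g1_at)
  have g1k: "g1 y (k j') = y (Inr j')" if "j' < m" for j'
    using that kM[OF that S] the_inv_into_f_f[OF kinj] by (simp add: g1_at yl)
  have g1o: "g1 y w = 0" if "w \<notin> S" "w \<notin> k ` {..<m}" for w using that by (simp add: g1_at yl)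
  have ge: "g1 y e = 0" using g1o[of e] eM[OF S] ek by auto
  have sub1: "{v. g1 y v \<noteq> 0} \<subseteq> insert (k j) S"
  proof
    fix w assume w: "w \<in> {v. g1 y v \<noteq> 0}"
    show "w \<in> insert (k j) S"
    proof (cases "w \<in> S")
      case False
      then obtain j' where "j' < m" "w = k j'" using g1o w by blast
      then show ?thesis using w g1k yr by (cases "j' = j") auto
    qed simp
  qed
  have sm1: "sum (g1 y) S + g1 y (k j) = 1" using sm g1S g1k[OF j] by simp
  show "g1 y \<in> RK" unfolding RK_def
    by (rule KcI1[OF _ S j sub1 sm1]) (use nn in \<open>auto simp: g1_def intro!: add_nonneg_nonneg sum_nonneg\<close>)
  show "F2 (g1 y) = bpt" by (rule F2_small) (simp add: ge)
  show "F1 (g1 y) = y"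
  proof (rule ext)
    fix i show "F1 (g1 y) i = y i"
    proof (cases i)
      case (Inl w)
      show ?thesis
      proof (cases "w = e \<or> w \<in> k ` {..<m}")
        case True
        then have "w \<notin> S" using eM[OF S] kM'[OF S] by blast
        then show ?thesis using True Inl yl by (simp add: F1_def)
      next
        case False
        then show ?thesis using Inl by (cases "w \<in> S") (auto simp: F1_def ge dF0 g1S g1o yl)
      qed
    next
      case (Inr j')
      show ?thesis
      proof (cases "j' < m")
        case True then show ?thesis using Inr by (simp add: F1_def ge g1k)
      next
        case False then have "j' \<noteq> j" using j by auto
        then show ?thesis using False Inr yr by (simp add: F1_def)
      qed
    qed
  qed
qed

lemma caseZ:
  assumes z: "z \<in> R2"
  shows "g2 z \<in> RK" "F1 (g2 z) \<in> R1" "F2 (g2 z) \<in> R2" "F1 (g2 z) = bpt \<or> F2 (g2 z) = bpt"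
    "\<exists>\<sigma>\<in>Sigma_m m M. {i. F1 (g2 z) i \<noteq> 0} \<subseteq> \<sigma> \<and> {i. bpt i \<noteq> 0} \<subseteq> \<sigma>"
    "QQ z \<in> R2"
    "\<exists>\<sigma>\<in>suspension A. {i. F2 (g2 z) i \<noteq> 0} \<subseteq> \<sigma> \<and> {i. QQ z i \<noteq> 0} \<subseteq> \<sigma>"
    "\<exists>\<sigma>\<in>suspension A. {i. QQ z i \<noteq> 0} \<subseteq> \<sigma> \<and> {i. z i \<noteq> 0} \<subseteq> \<sigma>"
proof -
  obtain S i where nn: "\<forall>v. 0 \<le> z v" and S: "S \<in> A" and i: "i < 2" and sub: "{v. z v \<noteq> 0} \<subseteq> S <+> {i}"
    and sm: "sum (z \<circ> Inl) S + z (Inr i) = 1" using R2_cases[OF z] by blast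
  have SM: "S \<in> M" using S AM by blast
  have zl: "z (Inl w) = 0" if "w \<notin> S" for w using sub that by auto
  have zr: "z (Inr j') = 0" if "j' \<noteq> i" for j' using sub that by auto
  have k0S: "k 0 \<notin> S" using kM[OF m SM] .
  have eS: "e \<notin> S" using eA[OF S] .
  have ke: "k 0 \<noteq> e" using ek[OF m] .
  have g2S: "g2 z w = z (Inl w)" if "w \<in> S" for w using that k0S eS by (auto simp: g2_def)
  have g2o: "g2 z w = 0" if "w \<notin> S" "w \<noteq> k 0" "w \<noteq> e" for w using that by (simp add: g2_def zl)
  have g2k: "g2 z (k 0) = z (Inr 0)" using k0S ke by (simp add: g2_def zl)
  have g2e: "g2 z e = z (Inr 1)" using eS ke by (simp add: g2_def zl)
  have nng: "\<forall>v. 0 \<le> g2 z v" using nn by (simp add: g2_def)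
  have bsub: "{i. bpt i \<noteq> 0} \<subseteq> S <+> {0}" by (auto simp: bpt_def vertex_point_def)
  have QQl: "QQ z (Inl w) = z (Inl w) * pF (z (Inr 1))" for w by (simp add: QQ_def)
  have nnQ: "\<forall>v. 0 \<le> QQ z v" using nn by (auto simp: QQ_def pF_nn split: sum.split)
  have SA0: "S <+> {0} \<in> suspension A" "S <+> {1} \<in> suspension A"
    unfolding suspension_def using S by (auto intro: face_plus)
  have SM0: "S <+> {0} \<in> Sigma_m m M" unfolding Sigma_m_def using SM m by (rule face_plus)
  have "i = 0 \<or> i = 1" using i by auto
  then have main: "g2 z \<in> RK \<and> F1 (g2 z) \<in> R1 \<and> F2 (g2 z) \<in> R2 \<and> (F1 (g2 z) = bpt \<or> F2 (g2 z) = bpt) \<and>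
    {i. F1 (g2 z) i \<noteq> 0} \<subseteq> S <+> {0} \<and> QQ z \<in> R2 \<and>
    (\<exists>\<sigma>\<in>suspension A. {i. F2 (g2 z) i \<noteq> 0} \<subseteq> \<sigma> \<and> {i. QQ z i \<noteq> 0} \<subseteq> \<sigma>) \<and>
    (\<exists>\<sigma>\<in>suspension A. {i. QQ z i \<noteq> 0} \<subseteq> \<sigma> \<and> {i. z i \<noteq> 0} \<subseteq> \<sigma>)"
  proof
    assume i0: "i = 0"
    have z1: "z (Inr 1) = 0" using zr i0 by simp
    have subg: "{v. g2 z v \<noteq> 0} \<subseteq> insert (k 0) S"
    proof
      fix w assume w: "w \<in> {v. g2 z v \<noteq> 0}"
      show "w \<in> insert (k 0) S"
      proof (rule ccontr)
        assume "w \<notin> insert (k 0) S"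
        then show False using w g2o[of w] g2e z1 by (cases "w = e") auto
      qed
    qed
    have smg: "sum (g2 z) S + g2 z (k 0) = 1" using sm i0 g2S g2k by simp
    note cM = caseM[OF nng SM m subg smg]
    have gRK: "g2 z \<in> RK" unfolding RK_def by (rule KcI1[OF nng SM m subg smg])
    have QQz: "QQ z = z"
    proof (rule ext)
      fix j show "QQ z j = z j" using z1 by (cases j) (auto simp: QQ_def pF0)
    qed
    have e1: "\<exists>\<sigma>\<in>suspension A. {i. F2 (g2 z) i \<noteq> 0} \<subseteq> \<sigma> \<and> {i. QQ z i \<noteq> 0} \<subseteq> \<sigma>"
      by (rule bexI[OF _ SA0(1)]) (use bsub sub i0 cM(4) QQz in simp)
    have e2: "\<exists>\<sigma>\<in>suspension A. {i. QQ z i \<noteq> 0} \<subseteq> \<sigma> \<and> {i. z i \<noteq> 0} \<subseteq> \<sigma>"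
      by (rule bexI[OF _ SA0(1)]) (use sub i0 QQz in simp)
    show ?thesis using gRK cM(2) cM(4) bpt_R2 cM(3)[unfolded i0] QQz z e1 e2 by simp
  next
    assume i1: "i = 1"
    have z0: "z (Inr 0) = 0" using zr i1 by simp
    have subg: "{v. g2 z v \<noteq> 0} \<subseteq> insert e S"
    proof
      fix w assume w: "w \<in> {v. g2 z v \<noteq> 0}"
      show "w \<in> insert e S"
      proof (rule ccontr)
        assume "w \<notin> insert e S"
        then show False using w g2o[of w] g2k z0 by (cases "w = k 0") auto
      qed
    qed
    have smg: "sum (g2 z) S + g2 z e = 1" using sm i1 g2S g2e by simp
    note cA = caseA[OF nng S subg smg]
    have gRK: "g2 z \<in> RK" unfolding RK_def by (rule KcI2[OF nng S subg smg])
    have t1: "z (Inr 1) \<le> 1" using cA(3) g2e by simp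
    have Qsub1: "{i. QQ z i \<noteq> 0} \<subseteq> S <+> {1}"
    proof
      fix j assume "j \<in> {i. QQ z i \<noteq> 0}" then show "j \<in> S <+> {1}"
        using zl zr i1 by (cases j) (auto simp: QQ_def split: if_splits)
    qed
    have Qsub0: "{i. QQ z i \<noteq> 0} \<subseteq> S <+> {0}" if "z (Inr 1) \<le> 3/4"
    proof
      fix j assume "j \<in> {i. QQ z i \<noteq> 0}" then show "j \<in> S <+> {0}"
        using zl zr i1 that by (cases j) (auto simp: QQ_def split: if_splits)
    qed
    have sQ: "sum (QQ z \<circ> Inl) S = pF (z (Inr 1)) * (1 - z (Inr 1))"
    proof -
      have "sum (QQ z \<circ> Inl) S = sum (\<lambda>w. z (Inl w) * pF (z (Inr 1))) S" by (simp add: QQ_def)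
      also have "\<dots> = pF (z (Inr 1)) * sum (z \<circ> Inl) S" by (simp add: sum_distrib_left mult.commute)
      finally show ?thesis using sm i1 by simp
    qed
    have QR2: "QQ z \<in> R2" unfolding R2_def suspension_def
    proof (rule sjoin_dp_realI[OF A nnQ S _ Qsub1])
      show "sum (QQ z \<circ> Inl) S + QQ z (Inr 1) = 1" using sQ a4[OF t1] by (simp add: QQ_def mult.commute)
    qed simp
    have ex1: "\<exists>\<sigma>\<in>suspension A. {i. F2 (g2 z) i \<noteq> 0} \<subseteq> \<sigma> \<and> {i. QQ z i \<noteq> 0} \<subseteq> \<sigma>"
    proof (cases "z (Inr 1) \<le> 3/4")
      case True then show ?thesis using cA(7) Qsub0 SA0 g2e by auto
    next
      case False then show ?thesis using cA(8) Qsub1 SA0 g2e by auto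
    qed
    have e2: "\<exists>\<sigma>\<in>suspension A. {i. QQ z i \<noteq> 0} \<subseteq> \<sigma> \<and> {i. z i \<noteq> 0} \<subseteq> \<sigma>"
      by (rule bexI[OF _ SA0(2)]) (use sub i1 Qsub1 in simp)
    show ?thesis using gRK cA(4,5,6,9) QR2 ex1 e2 by simp
  qed
  then show "g2 z \<in> RK" "F1 (g2 z) \<in> R1" "F2 (g2 z) \<in> R2" "F1 (g2 z) = bpt \<or> F2 (g2 z) = bpt"
    "QQ z \<in> R2"
    "\<exists>\<sigma>\<in>suspension A. {i. F2 (g2 z) i \<noteq> 0} \<subseteq> \<sigma> \<and> {i. QQ z i \<noteq> 0} \<subseteq> \<sigma>"
    "\<exists>\<sigma>\<in>suspension A. {i. QQ z i \<noteq> 0} \<subseteq> \<sigma> \<and> {i. z i \<noteq> 0} \<subseteq> \<sigma>"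
    by simp_all
  have "{i. F1 (g2 z) i \<noteq> 0} \<subseteq> S <+> {0}" using main by simp
  then show "\<exists>\<sigma>\<in>Sigma_m m M. {i. F1 (g2 z) i \<noteq> 0} \<subseteq> \<sigma> \<and> {i. bpt i \<noteq> 0} \<subseteq> \<sigma>"
    using SM0 bsub by blast
qed

end

context cat_setup begin

lemma caseX:
  assumes x: "x \<in> RK"
  shows "(F1 x, F2 x) \<in> WW" "PP x \<in> RK"
    "\<exists>\<sigma>\<in>Kc. {v. GG (F1 x, F2 x) v \<noteq> 0} \<subseteq> \<sigma> \<and> {v. PP x v \<noteq> 0} \<subseteq> \<sigma>"
    "\<exists>\<sigma>\<in>Kc. {v. PP x v \<noteq> 0} \<subseteq> \<sigma> \<and> {v. x v \<noteq> 0} \<subseteq> \<sigma>"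
proof -
  have c: "(\<forall>v. 0 \<le> x v) \<and>
    ((\<exists>S j. S \<in> M \<and> j < m \<and> {v. x v \<noteq> 0} \<subseteq> insert (k j) S \<and> sum x S + x (k j) = 1) \<or>
     (\<exists>S. S \<in> A \<and> {v. x v \<noteq> 0} \<subseteq> insert e S \<and> sum x S + x e = 1))"
    using Kc_cases x unfolding RK_def by blast
  then have nn: "\<forall>v. 0 \<le> x v" by blast
  have "(F1 x, F2 x) \<in> WW \<and> PP x \<in> RK \<and>
    (\<exists>\<sigma>\<in>Kc. {v. GG (F1 x, F2 x) v \<noteq> 0} \<subseteq> \<sigma> \<and> {v. PP x v \<noteq> 0} \<subseteq> \<sigma>) \<and>
    (\<exists>\<sigma>\<in>Kc. {v. PP x v \<noteq> 0} \<subseteq> \<sigma> \<and> {v. x v \<noteq> 0} \<subseteq> \<sigma>)"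
    using c
  proof (elim conjE disjE exE)
    fix S j assume S: "S \<in> M" "j < m" "{v. x v \<noteq> 0} \<subseteq> insert (k j) S" "sum x S + x (k j) = 1"
    note cM = caseM[OF nn S]
    have f: "insert (k j) S \<in> Kc" using S unfolding Kc_def by blast
    have W: "(F1 x, F2 x) \<in> WW" using cM(2,4) unfolding WW_def by simp
    show ?thesis using W x cM(5,6) f S(3) by auto
  next
    fix S assume S: "S \<in> A" "{v. x v \<noteq> 0} \<subseteq> insert e S" "sum x S + x e = 1"
    note cA = caseA[OF nn S]
    have f1: "insert (k 0) S \<in> Kc" "insert e S \<in> Kc" using S AM m unfolding Kc_def by blast+
    have W: "(F1 x, F2 x) \<in> WW" using cA(4,6,9) bpt_R1 bpt_R2 unfolding WW_def by auto
    have e1: "\<exists>\<sigma>\<in>Kc. {v. GG (F1 x, F2 x) v \<noteq> 0} \<subseteq> \<sigma> \<and> {v. PP x v \<noteq> 0} \<subseteq> \<sigma>"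
    proof (cases "x e \<le> 3/4")
      case True then show ?thesis using cA(12,13) f1 by blast
    next
      case False then show ?thesis using cA(11,14) f1 by auto
    qed
    show ?thesis using W cA(10,11) e1 f1 S(2) by blast
  qed
  then show "(F1 x, F2 x) \<in> WW" "PP x \<in> RK"
    "\<exists>\<sigma>\<in>Kc. {v. GG (F1 x, F2 x) v \<noteq> 0} \<subseteq> \<sigma> \<and> {v. PP x v \<noteq> 0} \<subseteq> \<sigma>"
    "\<exists>\<sigma>\<in>Kc. {v. PP x v \<noteq> 0} \<subseteq> \<sigma> \<and> {v. x v \<noteq> 0} \<subseteq> \<sigma>" by simp_all
qed

lemma GG_WW: "p \<in> WW \<Longrightarrow> GG p \<in> RK"
  unfolding WW_def using GG_y GG_z caseY(1) caseZ(1) by auto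

lemma RK_geom: "geom Kc = top_of_set RK" unfolding geom_def RK_def ..

lemma WW_geom: "wedge_space (geom (Sigma_m m M)) bpt (geom (suspension A)) bpt = top_of_set WW"
proof -
  have "wedge_space (geom (Sigma_m m M)) bpt (geom (suspension A)) bpt =
      subtopology (top_of_set (R1 \<times> R2)) (R1 \<times> {bpt} \<union> {bpt} \<times> R2)"
    unfolding wedge_space_def geom_def R1_def R2_def by simp
  also have "\<dots> = top_of_set ((R1 \<times> R2) \<inter> (R1 \<times> {bpt} \<union> {bpt} \<times> R2))"
    by (simp add: subtopology_subtopology)
  also have "(R1 \<times> R2) \<inter> (R1 \<times> {bpt} \<union> {bpt} \<times> R2) = WW"
    using bpt_R1 bpt_R2 unfolding WW_def by auto
  finally show ?thesis .
qed

lemma lin_same: "(\<lambda>w. (1 - (s::real)) * f w + s * f w) = (f :: 'a \<Rightarrow> real)"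
  by (rule ext) (simp add: algebra_simps)

theorem core: "geom Kc homotopy_equivalent_space
   wedge_space (geom (Sigma_m m M)) bpt (geom (suspension A)) bpt"
proof -
  define FF where "FF = (\<lambda>x. (F1 x, F2 x))"
  have cFF: "continuous_on S FF" for S unfolding FF_def by (intro continuous_on_Pair cont_F1 cont_F2)
  have FFW: "FF x \<in> WW" if "x \<in> RK" for x using caseX(1)[OF that] by (simp add: FF_def)
  have cGG: "continuous_on S GG" for S by (rule cont_GG)
  have h1: "homotopic_with_canon (\<lambda>_. True) RK RK (GG \<circ> FF) id"
  proof (rule homotopic_with_trans)
    show "homotopic_with_canon (\<lambda>_. True) RK RK (GG \<circ> FF) PP"
    proof (rule line_htpy)
      show "continuous_on RK (GG \<circ> FF)" by (intro continuous_on_compose cFF cGG)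
      show "continuous_on RK PP" by (rule cont_PP)
      fix p and s :: real assume p: "p \<in> RK" and s: "0 \<le> s" "s \<le> 1"
      obtain \<sigma> where \<sigma>: "\<sigma> \<in> Kc" "{v. GG (F1 p, F2 p) v \<noteq> 0} \<subseteq> \<sigma>" "{v. PP p v \<noteq> 0} \<subseteq> \<sigma>"
        using caseX(3)[OF p] by blast
      have "GG (FF p) \<in> RK" using GG_WW FFW p by blast
      then show "(\<lambda>w. (1 - s) * (GG \<circ> FF) p w + s * PP p w) \<in> RK"
        using line_in_realization[OF Kc_sc _ _ \<sigma> s] caseX(2)[OF p] unfolding RK_def FF_def by simp
    qed
    show "homotopic_with_canon (\<lambda>_. True) RK RK PP id"
    proof (rule line_htpy)
      show "continuous_on RK PP" by (rule cont_PP)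
      show "continuous_on RK id" by (rule continuous_on_id')
      fix p and s :: real assume p: "p \<in> RK" and s: "0 \<le> s" "s \<le> 1"
      obtain \<sigma> where \<sigma>: "\<sigma> \<in> Kc" "{v. PP p v \<noteq> 0} \<subseteq> \<sigma>" "{v. p v \<noteq> 0} \<subseteq> \<sigma>"
        using caseX(4)[OF p] by blast
      show "(\<lambda>w. (1 - s) * PP p w + s * id p w) \<in> RK"
        using line_in_realization[OF Kc_sc _ _ \<sigma> s] caseX(2)[OF p] p unfolding RK_def by simp
    qed
  qed
  define Phi1 where "Phi1 = (\<lambda>p::('v + nat \<Rightarrow> real) \<times> ('v + nat \<Rightarrow> real). (fst p, F2 (g2 (snd p))))"
  define Phi2 where "Phi2 = (\<lambda>p::('v + nat \<Rightarrow> real) \<times> ('v + nat \<Rightarrow> real). (fst p, QQ (snd p)))"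
  have cPhi1: "continuous_on WW Phi1" unfolding Phi1_def
    by (intro continuous_on_Pair continuous_on_fst continuous_on_id
        continuous_on_compose2[OF cont_F2[of UNIV]] continuous_on_compose2[OF cont_g2[of UNIV]] continuous_on_snd) auto
  have cPhi2: "continuous_on WW Phi2" unfolding Phi2_def
    by (intro continuous_on_Pair continuous_on_fst continuous_on_id
        continuous_on_compose2[OF cont_QQ[of UNIV]] continuous_on_snd) auto
  have WWcases: "(\<exists>y. p = (y, bpt) \<and> y \<in> R1) \<or> (\<exists>z. p = (bpt, z) \<and> z \<in> R2)" if "p \<in> WW" for p
    using that unfolding WW_def by auto
  have h2: "homotopic_with_canon (\<lambda>_. True) WW WW (FF \<circ> GG) id"
  proof (rule homotopic_with_trans)
    show "homotopic_with_canon (\<lambda>_. True) WW WW (FF \<circ> GG) Phi1"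
    proof (rule line_htpy2)
      show "continuous_on WW (FF \<circ> GG)" by (intro continuous_on_compose cFF cGG)
      show "continuous_on WW Phi1" by (rule cPhi1)
      fix p and s :: real assume p: "p \<in> WW" and s: "0 \<le> s" "s \<le> 1"
      show "((\<lambda>w. (1 - s) * fst ((FF \<circ> GG) p) w + s * fst (Phi1 p) w),
             (\<lambda>w. (1 - s) * snd ((FF \<circ> GG) p) w + s * snd (Phi1 p) w)) \<in> WW"
        using WWcases[OF p]
      proof (elim disjE exE conjE)
        fix y assume py: "p = (y, bpt)" "y \<in> R1"
        show ?thesis using py caseY[OF py(2)] bpt_R1
          by (simp add: FF_def Phi1_def GG_y g2_bpt F2_vk0 lin_same WW_def)
      next
        fix z assume pz: "p = (bpt, z)" "z \<in> R2"
        note cZ = caseZ[OF pz(2)]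
        obtain \<sigma> where \<sigma>: "\<sigma> \<in> Sigma_m m M" "{i. F1 (g2 z) i \<noteq> 0} \<subseteq> \<sigma>" "{i. bpt i \<noteq> 0} \<subseteq> \<sigma>"
          using cZ(5) by blast
        have L: "(\<lambda>w. (1 - s) * F1 (g2 z) w + s * bpt w) \<in> R1"
          using line_in_realization[OF SM_sc _ _ \<sigma> s] cZ(2) bpt_R1 unfolding R1_def by simp
        show ?thesis
        proof (cases "F2 (g2 z) = bpt")
          case True then show ?thesis using pz L by (simp add: FF_def Phi1_def GG_z lin_same WW_def)
        next
          case False then have "F1 (g2 z) = bpt" using cZ(4) by blast
          then show ?thesis using pz cZ(3) by (simp add: FF_def Phi1_def GG_z lin_same WW_def)
        qed
      qed
    qed
    show "homotopic_with_canon (\<lambda>_. True) WW WW Phi1 id"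
    proof (rule homotopic_with_trans)
      show "homotopic_with_canon (\<lambda>_. True) WW WW Phi1 Phi2"
      proof (rule line_htpy2[OF cPhi1 cPhi2])
        fix p and s :: real assume p: "p \<in> WW" and s: "0 \<le> s" "s \<le> 1"
        show "((\<lambda>w. (1 - s) * fst (Phi1 p) w + s * fst (Phi2 p) w),
               (\<lambda>w. (1 - s) * snd (Phi1 p) w + s * snd (Phi2 p) w)) \<in> WW"
          using WWcases[OF p]
        proof (elim disjE exE conjE)
          fix y assume py: "p = (y, bpt)" "y \<in> R1"
          show ?thesis using py bpt_R1
            by (simp add: Phi1_def Phi2_def g2_bpt F2_vk0 QQ_bpt lin_same WW_def)
        next
          fix z assume pz: "p = (bpt, z)" "z \<in> R2"
          note cZ = caseZ[OF pz(2)]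
          obtain \<sigma> where \<sigma>: "\<sigma> \<in> suspension A" "{i. F2 (g2 z) i \<noteq> 0} \<subseteq> \<sigma>" "{i. QQ z i \<noteq> 0} \<subseteq> \<sigma>"
            using cZ(7) by blast
          have L: "(\<lambda>w. (1 - s) * F2 (g2 z) w + s * QQ z w) \<in> R2"
            using line_in_realization[OF SA_sc _ _ \<sigma> s] cZ(3,6) unfolding R2_def by simp
          show ?thesis using pz L by (simp add: Phi1_def Phi2_def lin_same WW_def)
        qed
      qed
      show "homotopic_with_canon (\<lambda>_. True) WW WW Phi2 id"
      proof (rule line_htpy2[OF cPhi2 continuous_on_id'])
        fix p and s :: real assume p: "p \<in> WW" and s: "0 \<le> s" "s \<le> 1"
        show "((\<lambda>w. (1 - s) * fst (Phi2 p) w + s * fst (id p) w),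
               (\<lambda>w. (1 - s) * snd (Phi2 p) w + s * snd (id p) w)) \<in> WW"
          using WWcases[OF p]
        proof (elim disjE exE conjE)
          fix y assume py: "p = (y, bpt)" "y \<in> R1"
          show ?thesis using py bpt_R1
            by (simp add: Phi2_def QQ_bpt lin_same WW_def)
        next
          fix z assume pz: "p = (bpt, z)" "z \<in> R2"
          note cZ = caseZ[OF pz(2)]
          obtain \<sigma> where \<sigma>: "\<sigma> \<in> suspension A" "{i. QQ z i \<noteq> 0} \<subseteq> \<sigma>" "{i. z i \<noteq> 0} \<subseteq> \<sigma>"
            using cZ(8) by blast
          have L: "(\<lambda>w. (1 - s) * QQ z w + s * z w) \<in> R2"
            using line_in_realization[OF SA_sc _ _ \<sigma> s] cZ(6) pz(2) unfolding R2_def by simp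
          show ?thesis using pz L by (simp add: Phi2_def lin_same WW_def)
        qed
      qed
    qed
  qed
  show ?thesis unfolding RK_geom WW_geom homotopy_equivalent_space_def
  proof (intro exI conjI)
    show "continuous_map (top_of_set RK) (top_of_set WW) FF" using cFF FFW by auto
    show "continuous_map (top_of_set WW) (top_of_set RK) GG" using cGG GG_WW by auto
  qed (use h1 h2 in auto)
qed

end

lemma edeg_insert:
  assumes "finite S" "a \<notin> S"
  shows "edge_degree (insert a S) v = edge_degree S v + (if v \<in> a then 1 else 0)"
proof -
  have fin: "finite {x \<in> S. v \<in> x}" using assms by simp
  show ?thesis
  proof (cases "v \<in> a")
    case True
    then have "{x \<in> insert a S. v \<in> x} = insert a {x \<in> S. v \<in> x}" by auto
    then show ?thesis using True assms fin unfolding edge_degree_def by simp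
  next
    case False
    then have "{x \<in> insert a S. v \<in> x} = {x \<in> S. v \<in> x}" by auto
    then show ?thesis using False unfolding edge_degree_def by simp
  qed
qed

lemma edeg_zero: assumes "\<And>a. a \<in> S \<Longrightarrow> v \<notin> a" shows "edge_degree S v = 0"
proof -
  have "{x \<in> S. v \<in> x} = {}" using assms by auto
  then show ?thesis unfolding edge_degree_def by (metis card.empty)
qed

lemma edeg_mono: "finite H \<Longrightarrow> H' \<subseteq> H \<Longrightarrow> edge_degree H' v \<le> edge_degree H v"
  unfolding edge_degree_def by (rule card_mono) auto

lemma M2_sc: "simplicial_complex (M2 E)"
  unfolding simplicial_complex_def M2_def
proof (intro conjI ballI allI impI)
  show "{} \<in> {H. H \<subseteq> E \<and> finite H \<and> (\<forall>v. edge_degree H v \<le> 2)}" by (simp add: edge_degree_def)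
next
  fix F assume "F \<in> {H. H \<subseteq> E \<and> finite H \<and> (\<forall>v. edge_degree H v \<le> 2)}"
  then show "finite F" by simp
next
  fix F G assume F: "F \<in> {H. H \<subseteq> E \<and> finite H \<and> (\<forall>v. edge_degree H v \<le> 2)}" and G: "G \<subseteq> F"
  have "edge_degree G v \<le> 2" for v
    using F edeg_mono[of F G v] G by (metis (mono_tags, lifting) le_trans mem_Collect_eq)
  then show "G \<in> {H. H \<subseteq> E \<and> finite H \<and> (\<forall>v. edge_degree H v \<le> 2)}"
    using F G by (auto intro: finite_subset)
qed

lemma BD_sc: "simplicial_complex (BD E x)"
  unfolding simplicial_complex_def BD_def
proof (intro conjI ballI allI impI)
  show "{} \<in> {H. H \<subseteq> E \<and> finite H \<and> edge_degree H x \<le> 1 \<and> (\<forall>v. v \<noteq> x \<longrightarrow> edge_degree H v \<le> 2)}"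
    by (simp add: edge_degree_def)
next
  fix F assume "F \<in> {H. H \<subseteq> E \<and> finite H \<and> edge_degree H x \<le> 1 \<and> (\<forall>v. v \<noteq> x \<longrightarrow> edge_degree H v \<le> 2)}"
  then show "finite F" by simp
next
  fix F G assume F: "F \<in> {H. H \<subseteq> E \<and> finite H \<and> edge_degree H x \<le> 1 \<and> (\<forall>v. v \<noteq> x \<longrightarrow> edge_degree H v \<le> 2)}"
    and G: "G \<subseteq> F"
  have m: "edge_degree G v \<le> edge_degree F v" for v using F G edeg_mono[of F G v] by blast
  have "edge_degree G v \<le> 2" if "v \<noteq> x" for v using m[of v] F that by auto
  moreover have "edge_degree G x \<le> 1" using m[of x] F by auto
  ultimately show "G \<in> {H. H \<subseteq> E \<and> finite H \<and> edge_degree H x \<le> 1 \<and> (\<forall>v. v \<noteq> x \<longrightarrow> edge_degree H v \<le> 2)}"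
    using F G by (auto intro: finite_subset)
qed

lemma BD_M2: "BD E x \<subseteq> M2 E"
proof
  fix H assume H: "H \<in> BD E x"
  have "edge_degree H v \<le> 2" for v
    using H unfolding BD_def by (cases "v = x") auto
  then show "H \<in> M2 E" using H unfolding BD_def M2_def by auto
qed


lemma cat_mem: "a \<in> caterpillar m N \<longleftrightarrow>
  (\<exists>i. a = {P i, P (Suc i)} \<and> 1 \<le> i \<and> Suc i \<le> N) \<or> (\<exists>i j. a = {P i, L i j} \<and> 1 \<le> i \<and> i \<le> N \<and> j < m)"
  unfolding caterpillar_def by blast

lemma cat_memI1: "1 \<le> i \<Longrightarrow> Suc i \<le> N \<Longrightarrow> {P i, P (Suc i)} \<in> caterpillar m N"
  unfolding cat_mem by (intro disjI1 exI[of _ i]) simp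
lemma cat_memI2: "1 \<le> i \<Longrightarrow> i \<le> N \<Longrightarrow> j < m \<Longrightarrow> {P i, L i j} \<in> caterpillar m N"
  unfolding cat_mem by (intro disjI2 exI[of _ i] exI[of _ j]) simp

lemma cat_Suc:
  assumes "1 \<le> N"
  shows "caterpillar m (Suc N) = caterpillar m N \<union> {{P N, P (Suc N)}} \<union> {{P (Suc N), L (Suc N) j} | j. j < m}"
proof
  show "caterpillar m (Suc N) \<subseteq> caterpillar m N \<union> {{P N, P (Suc N)}} \<union> {{P (Suc N), L (Suc N) j} | j. j < m}"
  proof
    fix a assume a: "a \<in> caterpillar m (Suc N)"
    show "a \<in> caterpillar m N \<union> {{P N, P (Suc N)}} \<union> {{P (Suc N), L (Suc N) j} | j. j < m}"
      using a[unfolded cat_mem]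
    proof (elim disjE exE conjE)
      fix i assume 1: "a = {P i, P (Suc i)}" "1 \<le> i" "Suc i \<le> Suc N"
      show ?thesis
      proof (cases "i = N")
        case True then show ?thesis using 1 by simp
      next
        case False then have "Suc i \<le> N" using 1 by simp
        then have "a \<in> caterpillar m N" using cat_memI1 1 by simp
        then show ?thesis by simp
      qed
    next
      fix i j assume 2: "a = {P i, L i j}" "1 \<le> i" "i \<le> Suc N" "j < m"
      show ?thesis
      proof (cases "i = Suc N")
        case True then show ?thesis using 2 by auto
      next
        case False then have "i \<le> N" using 2 by simp
        then have "a \<in> caterpillar m N" using cat_memI2 2 by simp
        then show ?thesis by simp
      qed
    qed
  qed
  show "caterpillar m N \<union> {{P N, P (Suc N)}} \<union> {{P (Suc N), L (Suc N) j} | j. j < m} \<subseteq> caterpillar m (Suc N)"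
  proof
    fix a assume a: "a \<in> caterpillar m N \<union> {{P N, P (Suc N)}} \<union> {{P (Suc N), L (Suc N) j} | j. j < m}"
    show "a \<in> caterpillar m (Suc N)"
    proof -
      { assume "a \<in> caterpillar m N"
        then have ?thesis unfolding cat_mem[of a m N]
        proof (elim disjE exE conjE)
          fix i assume "a = {P i, P (Suc i)}" "1 \<le> i" "Suc i \<le> N"
          then show ?thesis using cat_memI1[of i "Suc N" m] by simp
        next
          fix i j assume "a = {P i, L i j}" "1 \<le> i" "i \<le> N" "j < m"
          then show ?thesis using cat_memI2[of i "Suc N" j m] by simp
        qed }
      moreover
      { assume "a = {P N, P (Suc N)}" then have ?thesis using cat_memI1[of N "Suc N" m] assms by simp }
      moreover
      { assume "a \<in> {{P (Suc N), L (Suc N) j} | j. j < m}"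
        then obtain j where "a = {P (Suc N), L (Suc N) j}" "j < m" by blast
        then have ?thesis using cat_memI2[of "Suc N" "Suc N" j m] by simp }
      ultimately show ?thesis using a by blast
    qed
  qed
qed
lemma cat_finite: "finite (caterpillar m N)"
proof -
  have "caterpillar m N \<subseteq> (\<lambda>i. {P i, P (Suc i)}) ` {..N} \<union> (\<lambda>(i,j). {P i, L i j}) ` ({..N} \<times> {..<m})"
  proof
    fix a assume "a \<in> caterpillar m N"
    then show "a \<in> (\<lambda>i. {P i, P (Suc i)}) ` {..N} \<union> (\<lambda>(i,j). {P i, L i j}) ` ({..N} \<times> {..<m})"
      unfolding cat_mem
    proof (elim disjE exE conjE)
      fix i assume "a = {P i, P (Suc i)}" "1 \<le> i" "Suc i \<le> N"
      then have "a \<in> (\<lambda>i. {P i, P (Suc i)}) ` {..N}" by (intro image_eqI[of _ _ i]) auto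
      then show ?thesis by blast
    next
      fix i j assume "a = {P i, L i j}" "1 \<le> i" "i \<le> N" "j < m"
      then have "a \<in> (\<lambda>(i,j). {P i, L i j}) ` ({..N} \<times> {..<m})" by (intro image_eqI[of _ _ "(i,j)"]) auto
      then show ?thesis by blast
    qed
  qed
  then show ?thesis by (rule finite_subset) auto
qed

lemma cat_notin:
  assumes "a \<in> caterpillar m N"
  shows "P (Suc N) \<notin> a" "L (Suc N) j \<notin> a"
  using assms unfolding caterpillar_def by auto

lemma BD_decomp:
  fixes m N :: nat
  assumes N: "1 \<le> N"
  defines "E \<equiv> caterpillar m N" and "x \<equiv> P (Suc N)" and "e \<equiv> {P N, P (Suc N)}"
    and "k \<equiv> (\<lambda>j. {P (Suc N), L (Suc N) j})"
  shows "BD (caterpillar m (Suc N)) x =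
    M2 E \<union> {insert (k j) S | j S. j < m \<and> S \<in> M2 E} \<union> {insert e S | S. S \<in> BD E (P N)}"
proof
  have E': "caterpillar m (Suc N) = E \<union> {e} \<union> {k j | j. j < m}"
    unfolding E_def e_def k_def using cat_Suc[OF N] by simp
  have xE: "a \<in> E \<Longrightarrow> x \<notin> a" for a unfolding x_def E_def using cat_notin by blast
  have LE: "a \<in> E \<Longrightarrow> L (Suc N) j \<notin> a" for a j unfolding E_def using cat_notin by blast
  have eE: "e \<notin> E" using xE unfolding e_def x_def by blast
  have kE: "k j \<notin> E" for j using xE unfolding k_def x_def by blast
  have xe: "x \<in> e" "x \<in> k j" for j unfolding x_def e_def k_def by auto
  have PNx: "P N \<noteq> x" unfolding x_def by simp
  show "BD (caterpillar m (Suc N)) x \<subseteq>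
    M2 E \<union> {insert (k j) S | j S. j < m \<and> S \<in> M2 E} \<union> {insert e S | S. S \<in> BD E (P N)}"
  proof
    fix H assume H: "H \<in> BD (caterpillar m (Suc N)) x"
    then have HE: "H \<subseteq> E \<union> {e} \<union> {k j | j. j < m}" and finH: "finite H"
      and dx: "edge_degree H x \<le> 1" and dv: "\<And>v. v \<noteq> x \<Longrightarrow> edge_degree H v \<le> 2"
      unfolding BD_def E' by auto
    define S where "S = H \<inter> E"
    define R where "R = H - E"
    have finS: "finite S" "finite R" using finH unfolding S_def R_def by auto
    have RH: "R \<subseteq> {a \<in> H. x \<in> a}" using HE xe unfolding R_def by auto
    have "card R \<le> edge_degree H x" unfolding edge_degree_def by (rule card_mono) (use finH RH in auto)
    then have cR: "card R \<le> Suc 0" using dx by simp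
    have SM: "S \<in> M2 E"
    proof -
      have "edge_degree S v \<le> 2" for v
      proof (cases "v = x")
        case True then have "edge_degree S v = 0" by (intro edeg_zero) (use xE in \<open>auto simp: S_def\<close>)
        then show ?thesis by simp
      next
        case False
        have "edge_degree S v \<le> edge_degree H v" by (rule edeg_mono[OF finH]) (auto simp: S_def)
        then show ?thesis using dv[OF False] by simp
      qed
      then show ?thesis unfolding M2_def using finS by (auto simp: S_def)
    qed
    have HSR: "H = S \<union> R" unfolding S_def R_def by auto
    show "H \<in> M2 E \<union> {insert (k j) S | j S. j < m \<and> S \<in> M2 E} \<union> {insert e S | S. S \<in> BD E (P N)}"
    proof (cases "R = {}")
      case True then show ?thesis using HSR SM by simp
    next
      case False
      then obtain a where a: "R = {a}" using cR finS(2) by (metis card_le_Suc0_iff_eq ex_in_conv insertI1 subsetI subset_antisym singleton_iff) 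
      have aS: "a \<notin> S" and Ha: "H = insert a S" using a HSR unfolding S_def R_def by auto
      have "a \<in> {e} \<union> {k j | j. j < m}" using a HE unfolding R_def by auto
      then show ?thesis
      proof (elim UnE)
        assume "a \<in> {e}"
        then have ae: "a = e" by simp
        have "edge_degree H (P N) = edge_degree S (P N) + 1"
          using edeg_insert[OF finS(1) aS, of "P N"] Ha ae unfolding e_def by simp
        then have d1: "edge_degree S (P N) \<le> 1" using dv[OF PNx] by simp
        have "S \<in> BD E (P N)" using SM d1 unfolding M2_def BD_def by auto
        then show ?thesis using Ha ae by blast
      next
        assume "a \<in> {k j | j. j < m}"
        then obtain j where "a = k j" "j < m" by blast
        then show ?thesis using Ha SM by blast
      qed
    qed
  qed
  show "M2 E \<union> {insert (k j) S | j S. j < m \<and> S \<in> M2 E} \<union> {insert e S | S. S \<in> BD E (P N)}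
     \<subseteq> BD (caterpillar m (Suc N)) x"
  proof
    fix H assume "H \<in> M2 E \<union> {insert (k j) S | j S. j < m \<and> S \<in> M2 E} \<union> {insert e S | S. S \<in> BD E (P N)}"
    then consider "H \<in> M2 E" | j S where "H = insert (k j) S" "j < m" "S \<in> M2 E"
      | S where "H = insert e S" "S \<in> BD E (P N)" by blast
    then show "H \<in> BD (caterpillar m (Suc N)) x"
    proof cases
      case 1
      then have HE: "H \<subseteq> E" "finite H" "\<And>v. edge_degree H v \<le> 2" unfolding M2_def by auto
      have "edge_degree H x = 0" by (rule edeg_zero) (use HE xE in auto)
      then show ?thesis using HE unfolding BD_def E' by auto
    next
      case (2 j S)
      then have SE: "S \<subseteq> E" "finite S" "\<And>v. edge_degree S v \<le> 2" unfolding M2_def by auto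
      have kS: "k j \<notin> S" using SE kE by blast
      have d0: "edge_degree S x = 0" by (rule edeg_zero) (use SE xE in auto)
      have dL: "edge_degree S (L (Suc N) j) = 0" by (rule edeg_zero) (use SE LE in auto)
      have "edge_degree H v \<le> 2" if "v \<noteq> x" for v
      proof (cases "v \<in> k j")
        case True then have "v = L (Suc N) j" using that unfolding k_def x_def by auto
        then show ?thesis using edeg_insert[OF SE(2) kS, of v] dL 2(1) by simp
      next
        case False then show ?thesis using edeg_insert[OF SE(2) kS, of v] SE(3)[of v] 2(1) by simp
      qed
      moreover have "edge_degree H x \<le> 1" using edeg_insert[OF SE(2) kS, of x] d0 2(1) by simp
      ultimately show ?thesis using SE 2 unfolding BD_def E' by auto
    next
      case (3 S)
      then have SE: "S \<subseteq> E" "finite S" "edge_degree S (P N) \<le> 1" "\<And>v. v \<noteq> P N \<Longrightarrow> edge_degree S v \<le> 2"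
        unfolding BD_def by auto
      have eS: "e \<notin> S" using SE eE by blast
      have d0: "edge_degree S x = 0" by (rule edeg_zero) (use SE xE in auto)
      have "edge_degree H v \<le> 2" if "v \<noteq> x" for v
      proof (cases "v = P N")
        case True then show ?thesis using edeg_insert[OF SE(2) eS, of v] SE(3) 3(1) by simp
      next
        case False then have "v \<notin> e" using that unfolding e_def x_def by auto
        then show ?thesis using edeg_insert[OF SE(2) eS, of v] SE(4)[OF False] 3(1) by simp
      qed
      moreover have "edge_degree H x \<le> 1" using edeg_insert[OF SE(2) eS, of x] d0 3(1) xe by simp
      ultimately show ?thesis using SE 3 unfolding BD_def E' by auto
    qed
  qed
qed

theorem mainTheorem16:
  fixes m n :: nat
  assumes "m \<ge> 2" and "n \<ge> 2"
  shows "geom (BD_cat m n) homotopy_equivalent_space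
           wedge_space (geom (Sigma_m m (M2_cat m (n - 1)))) (vertex_point (Inr 0))
                       (geom (suspension (BD_cat m (n - 1)))) (vertex_point (Inr 0))"
proof -
  define N where "N = n - 1"
  have N: "1 \<le> N" and nN: "n = Suc N" using assms unfolding N_def by auto
  define k where "k = (\<lambda>j. {P (Suc N), L (Suc N) j})"
  define e where "e = {P N, P (Suc N)}"
  have xE: "a \<in> caterpillar m N \<Longrightarrow> P (Suc N) \<notin> a" for a using cat_notin by blast
  interpret cs: cat_setup "M2_cat m N" "BD_cat m N" m k e
  proof
    show "simplicial_complex (M2_cat m N)" unfolding M2_cat_def by (rule M2_sc)
    show "simplicial_complex (BD_cat m N)" unfolding BD_cat_def by (rule BD_sc)
    show "BD_cat m N \<subseteq> M2_cat m N" unfolding BD_cat_def M2_cat_def by (rule BD_M2)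
    show "0 < m" using assms by simp
    show "inj_on k {..<m}" unfolding k_def inj_on_def by (auto simp: doubleton_eq_iff)
    show "k j \<notin> S" if "j < m" "S \<in> M2_cat m N" for j S
      using that xE unfolding M2_cat_def M2_def k_def by blast
    show "e \<notin> S" if "S \<in> M2_cat m N" for S
      using that xE unfolding M2_cat_def M2_def e_def by blast
    show "k j \<noteq> e" if "j < m" for j unfolding k_def e_def by (auto simp: doubleton_eq_iff)
  qed
  have K: "cs.Kc = M2_cat m N \<union> {insert (k j) S | j S. j < m \<and> S \<in> M2_cat m N} \<union> {insert e S | S. S \<in> BD_cat m N}"
    by (rule cs.Kc_def)
  have "BD_cat m n = M2_cat m N \<union> {insert (k j) S | j S. j < m \<and> S \<in> M2_cat m N} \<union> {insert e S | S. S \<in> BD_cat m N}"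
    unfolding BD_cat_def M2_cat_def nN k_def e_def
    using BD_decomp[OF N, of m] by simp
  then have "BD_cat m n = cs.Kc" using K by simp
  then show ?thesis using cs.core unfolding cs.bpt_def N_def by simp
qed

end
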